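(* Let $p\in[1,\infty]$, $(f_u)_{u\in[0,T]}$ non-constant functions $f_u:\mathbb{R}^2\to[-\infty,+\infty)$, $(U_u)_u$ concave non-decreasing non-trivial functions $U_u:[-\infty,\infty)\to[-\infty,\infty)$, and $(B_{tu})_{0\le t\le u\le T}$ real numbers, and let $(\rho_{tu})$ be the h-generalized shortfall risk measure. Then, for every $0\le t\le u\le T$: (a) if $(y,m)\mapsto U_u(f_u(y,m))$ is non-decreasing in $y$ and in $m$ and concave in $y$, then $\rho_{tu}$ is monotone ($X\le Y\Rightarrow\rho_{tu}(X)\ge\rho_{tu}(Y)$) and quasi-convex: $\rho_{tu}(\lambda X+(1-\lambda)Y)\le\max\{\rho_{tu}(X),\rho_{tu}(Y)\}$ for $\lambda\in[0,1]$, $X,Y\in L^p(\mathcal{F}_u)$; (b) if in addition $U_u\circ f_u$ is jointly concave in $(y,m)$, then $\rho_{tu}$ is convex; (c) if in addition to (a), $f_u(y,k)\le f_u(y-m,k+m)$ for all $y,k\in\mathbb{R}$, $m>0$, then $\rho_{tu}(X+m_t)\ge\rho_{tu}(X)-m_t$ for all $X\in L^p(\mathcal{F}_u)$ and $m_t\in L^p(\mathcal{F}_t)$, $m_t\ge0$.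
   Context: $(\mathcal{F}_t)_{t\in[0,T]}$ is a filtration on $(\Omega,\mathcal{F},P)$. The h-generalized shortfall risk measure is $$\rho_{tu}(X)=\operatorname{ess.inf}\{m_t\in L^p(\mathcal{F}_t):E[U_u(f_u(X,m_t))\mid\mathcal{F}_t]\ge B_{tu}\},\qquad X\in L^p(\mathcal{F}_u),$$ with $\operatorname{ess.inf}\emptyset=+\infty$; conditional expectations are assumed well defined in the extended sense. *)

theory Defs
  imports "HOL-Probability.Probability"
begin

definition memLp :: "'a measure \<Rightarrow> 'a measure \<Rightarrow> ereal \<Rightarrow> ('a \<Rightarrow> real) \<Rightarrow> bool" where
  "memLp M N p X \<longleftrightarrow> X \<in> borel_measurable N \<and>
     (if p = \<infinity> then (\<exists>C. AE x in M. \<bar>X x\<bar> \<le> C)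
      else integrable M (\<lambda>x. \<bar>X x\<bar> powr real_of_ereal p))"

text \<open>Conditional expectation in the extended sense: E[Z+|N] - E[Z-|N].\<close>
definition ext_cond_exp :: "'a measure \<Rightarrow> 'a measure \<Rightarrow> ('a \<Rightarrow> ereal) \<Rightarrow> 'a \<Rightarrow> ereal" where
  "ext_cond_exp M N Z = (\<lambda>\<omega>. enn2ereal (nn_cond_exp M N (\<lambda>x. e2ennreal (Z x)) \<omega>)
                             - enn2ereal (nn_cond_exp M N (\<lambda>x. e2ennreal (- Z x)) \<omega>))"

definition ext_cond_exp_wd :: "'a measure \<Rightarrow> 'a measure \<Rightarrow> ('a \<Rightarrow> ereal) \<Rightarrow> bool" where
  "ext_cond_exp_wd M N Z \<longleftrightarrow> Z \<in> borel_measurable M \<and>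
     (AE \<omega> in M. \<not> (nn_cond_exp M N (\<lambda>x. e2ennreal (Z x)) \<omega> = \<infinity> \<and>
                      nn_cond_exp M N (\<lambda>x. e2ennreal (- Z x)) \<omega> = \<infinity>))"

text \<open>Z is (a version of) the essential infimum, in the lattice of N-measurable
  extended-real random variables ordered a.s., of the family S.  For S empty this
  forces Z = +infinity a.s.\<close>
definition is_ess_inf :: "'a measure \<Rightarrow> 'a measure \<Rightarrow> ('a \<Rightarrow> real) set \<Rightarrow> ('a \<Rightarrow> ereal) \<Rightarrow> bool" where
  "is_ess_inf M N S Z \<longleftrightarrow> Z \<in> borel_measurable N \<and>
     (\<forall>Y\<in>S. AE x in M. Z x \<le> ereal (Y x)) \<and>
     (\<forall>W \<in> borel_measurable N. (\<forall>Y\<in>S. AE x in M. W x \<le> ereal (Y x)) \<longrightarrow> (AE x in M. W x \<le> Z x))"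

definition shortfall_accept ::
  "'a measure \<Rightarrow> (real \<Rightarrow> 'a measure) \<Rightarrow> ereal \<Rightarrow> (real \<Rightarrow> real \<Rightarrow> real \<Rightarrow> ereal) \<Rightarrow>
   (real \<Rightarrow> ereal \<Rightarrow> ereal) \<Rightarrow> (real \<Rightarrow> real \<Rightarrow> real) \<Rightarrow> real \<Rightarrow> real \<Rightarrow> ('a \<Rightarrow> real) \<Rightarrow> ('a \<Rightarrow> real) set" where
  "shortfall_accept M F p f U B t u X =
     {m. memLp M (F t) p m \<and>
         (AE \<omega> in M. ereal (B t u) \<le> ext_cond_exp M (F t) (\<lambda>x. U u (f u (X x) (m x))) \<omega>)}"

definition is_shortfall_rm ::
  "'a measure \<Rightarrow> (real \<Rightarrow> 'a measure) \<Rightarrow> ereal \<Rightarrow> (real \<Rightarrow> real \<Rightarrow> real \<Rightarrow> ereal) \<Rightarrow>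
   (real \<Rightarrow> ereal \<Rightarrow> ereal) \<Rightarrow> (real \<Rightarrow> real \<Rightarrow> real) \<Rightarrow> real \<Rightarrow> real \<Rightarrow> ('a \<Rightarrow> real) \<Rightarrow> ('a \<Rightarrow> ereal) \<Rightarrow> bool" where
  "is_shortfall_rm M F p f U B t u X Z \<longleftrightarrow> is_ess_inf M (F t) (shortfall_accept M F p f U B t u X) Z"

definition concave_ereal_on :: "ereal set \<Rightarrow> (ereal \<Rightarrow> ereal) \<Rightarrow> bool" where
  "concave_ereal_on S g \<longleftrightarrow> (\<forall>x\<in>S. \<forall>y\<in>S. \<forall>l::real. 0 \<le> l \<and> l \<le> 1 \<longrightarrow>
     ereal l * g x + ereal (1 - l) * g y \<le> g (ereal l * x + ereal (1 - l) * y))"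

definition concave_real_ereal :: "(real \<Rightarrow> ereal) \<Rightarrow> bool" where
  "concave_real_ereal g \<longleftrightarrow> (\<forall>x y. \<forall>l::real. 0 \<le> l \<and> l \<le> 1 \<longrightarrow>
     ereal l * g x + ereal (1 - l) * g y \<le> g (l * x + (1 - l) * y))"

definition jointly_concave_ereal :: "(real \<Rightarrow> real \<Rightarrow> ereal) \<Rightarrow> bool" where
  "jointly_concave_ereal h \<longleftrightarrow> (\<forall>y1 m1 y2 m2. \<forall>l::real. 0 \<le> l \<and> l \<le> 1 \<longrightarrow>
     ereal l * h y1 m1 + ereal (1 - l) * h y2 m2 \<le> h (l * y1 + (1 - l) * y2) (l * m1 + (1 - l) * m2))"

end

theory Submission imports Defs begin
lemma ennreal_max0: "ennreal x = ennreal (max x 0)"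
  by (cases "0 \<le> x") (simp_all add: max_def ennreal_neg)

lemma ennreal_add3: "0 \<le> x \<Longrightarrow> 0 \<le> y \<Longrightarrow> 0 \<le> z \<Longrightarrow> ennreal (x + y + z) = ennreal x + ennreal y + ennreal z"
  by (simp add: ennreal_plus)

lemma ennreal_mult_max0: "0 \<le> c \<Longrightarrow> ennreal c * ennreal x = ennreal (c * max x 0)"
proof -
  assume c: "0 \<le> c"
  have 1: "ennreal (c * max x 0) = ennreal c * ennreal (max x 0)" by (rule ennreal_mult) (use c in auto)
  show ?thesis by (subst ennreal_max0[of x]) (rule 1[symmetric])
qed

lemma pt_fin:
  fixes a b r r1 r2 :: real
  assumes "0 \<le> a" "0 \<le> b" "a * r1 + b * r2 \<le> r"
  shows "ennreal (-r) + ennreal a * ennreal r1 + ennreal b * ennreal r2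
     \<le> ennreal r + ennreal a * ennreal (-r1) + ennreal b * ennreal (-r2)"
proof -
  have s: "ennreal x + ennreal (c * max y 0) + ennreal (d * max w 0)
     = ennreal (max x 0 + c * max y 0 + d * max w 0)" if "0 \<le> c" "0 \<le> d" for x y w c d
    by (subst ennreal_max0[of x], rule ennreal_add3[symmetric]) (use that in auto)
  have r: "max (-r) 0 + a * max r1 0 + b * max r2 0 \<le> max r 0 + a * max (-r1) 0 + b * max (-r2) 0"
  proof -
    have e: "max x 0 - max (-x) 0 = x" for x :: real by (simp add: max_def)
    have e1: "a * max r1 0 - a * max (-r1) 0 = a * r1" using e[of r1] by (metis right_diff_distrib)
    have e2: "b * max r2 0 - b * max (-r2) 0 = b * r2" using e[of r2] by (metis right_diff_distrib)
    show ?thesis using e[of r] e1 e2 assms(3) by linarith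
  qed
  show ?thesis
    using assms
    apply (simp only: ennreal_mult_max0 s)
    apply (rule ennreal_leI[OF r])
    done
qed

lemma fin_rep:
  fixes a :: real and z :: ereal
  assumes "0 \<le> a" "a = 0 \<or> z \<noteq> -\<infinity>" "z < \<infinity>"
  obtains r where "ereal a * z = ereal (a * r)" "ennreal a * e2ennreal z = ennreal a * ennreal r"
    "ennreal a * e2ennreal (-z) = ennreal a * ennreal (-r)"
proof (cases "a = 0")
  case True
  have "ereal 0 * z = ereal 0" by (cases z) (simp_all add: zero_ereal_def)
  then show ?thesis using that[of 0] True by simp
next
  case False
  then obtain r where "z = ereal r" using assms by (cases z) auto
  then show ?thesis using that[of r] by simp
qed

lemma pt_ineq:
  fixes z z1 z2 :: ereal and a b :: real
  assumes "0 \<le> a" "0 \<le> b" "z1 < \<infinity>" "z2 < \<infinity>" "ereal a * z1 + ereal b * z2 \<le> z"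
  shows "e2ennreal (-z) + ennreal a * e2ennreal z1 + ennreal b * e2ennreal z2
     \<le> e2ennreal z + ennreal a * e2ennreal (-z1) + ennreal b * e2ennreal (-z2)"
proof (cases "a = 0 \<or> z1 \<noteq> -\<infinity>")
  case c1: True
  show ?thesis
  proof (cases "b = 0 \<or> z2 \<noteq> -\<infinity>")
    case c2: True
    obtain r1 where r1: "ereal a * z1 = ereal (a * r1)" "ennreal a * e2ennreal z1 = ennreal a * ennreal r1"
      "ennreal a * e2ennreal (-z1) = ennreal a * ennreal (-r1)"
      using fin_rep[OF assms(1) c1 assms(3)] by blast
    obtain r2 where r2: "ereal b * z2 = ereal (b * r2)" "ennreal b * e2ennreal z2 = ennreal b * ennreal r2"
      "ennreal b * e2ennreal (-z2) = ennreal b * ennreal (-r2)"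
      using fin_rep[OF assms(2) c2 assms(4)] by blast
    have le: "ereal (a * r1 + b * r2) \<le> z" using assms(5) r1 r2 by simp
    show ?thesis
    proof (cases z)
      case (real r)
      then show ?thesis using pt_fin[OF assms(1,2), of r1 r2 r] le r1 r2 by (simp add: add.assoc)
    next
      case PInf
      then show ?thesis by simp
    next
      case MInf
      then show ?thesis using le by simp
    qed
  next
    case False
    then show ?thesis using assms by (simp add: ennreal_mult_top)
  qed
next
  case False
  then show ?thesis using assms by (simp add: ennreal_mult_top)
qed

lemma final_arith:
  fixes P N P1 N1 P2 N2 :: ennreal and a b B :: real
  assumes ab: "0 \<le> a" "0 \<le> b" "a + b = 1"
   and H: "N + ennreal a * P1 + ennreal b * P2 \<le> P + ennreal a * N1 + ennreal b * N2"
   and w: "\<not>(P = \<infinity> \<and> N = \<infinity>)" "\<not>(P1 = \<infinity> \<and> N1 = \<infinity>)" "\<not>(P2 = \<infinity> \<and> N2 = \<infinity>)"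
   and h1: "ereal B \<le> enn2ereal P1 - enn2ereal N1" and h2: "ereal B \<le> enn2ereal P2 - enn2ereal N2"
  shows "ereal B \<le> enn2ereal P - enn2ereal N"
proof -
  have N1: "N1 \<noteq> \<infinity>"
  proof
    assume "N1 = \<infinity>"
    then have "P1 \<noteq> \<infinity>" using w by auto
    then obtain q where "P1 = ennreal q" "0 \<le> q" by (cases P1) auto
    then show False using h1 \<open>N1 = \<infinity>\<close> by simp
  qed
  then obtain n1 where n1: "N1 = ennreal n1" "0 \<le> n1" by (cases N1) auto
  have N2: "N2 \<noteq> \<infinity>"
  proof
    assume "N2 = \<infinity>"
    then have "P2 \<noteq> \<infinity>" using w by auto
    then obtain q where "P2 = ennreal q" "0 \<le> q" by (cases P2) auto
    then show False using h2 \<open>N2 = \<infinity>\<close> by simp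
  qed
  then obtain n2 where n2: "N2 = ennreal n2" "0 \<le> n2" by (cases N2) auto
  show ?thesis
  proof (cases "P = \<infinity>")
    case True
    then have "N \<noteq> \<infinity>" using w by auto
    then obtain n where "N = ennreal n" "0 \<le> n" by (cases N) auto
    then show ?thesis using True by simp
  next
    case False
    then obtain p where p: "P = ennreal p" "0 \<le> p" by (cases P) auto
    have Rfin: "P + ennreal a * N1 + ennreal b * N2 = ennreal (p + a * n1 + b * n2)"
      using p n1 n2 ab by (simp add: ennreal_add3 ennreal_mult mult_nonneg_nonneg)
    have N: "N \<noteq> \<infinity>"
    proof
      assume "N = \<infinity>" then show False using H Rfin by (simp add: top_unique)
    qed
    then obtain n where n: "N = ennreal n" "0 \<le> n" by (cases N) auto
    have q1: "\<exists>q. ennreal a * P1 = ennreal (a * q) \<and> 0 \<le> a * q \<and> B \<le> q - n1"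
    proof (cases "a = 0")
      case True then show ?thesis by (intro exI[of _ "B + n1"]) simp
    next
      case False
      have "P1 \<noteq> \<infinity>"
      proof
        assume "P1 = \<infinity>"
        then have "ennreal a * P1 = \<infinity>" using False ab by (simp add: ennreal_mult_top)
        then show False using H Rfin by (simp add: top_unique)
      qed
      then obtain q where "P1 = ennreal q" "0 \<le> q" by (cases P1) auto
      then show ?thesis using h1 n1 ab by (intro exI[of _ q]) (simp add: ennreal_mult)
    qed
    have q2: "\<exists>q. ennreal b * P2 = ennreal (b * q) \<and> 0 \<le> b * q \<and> B \<le> q - n2"
    proof (cases "b = 0")
      case True then show ?thesis by (intro exI[of _ "B + n2"]) simp
    next
      case False
      have "P2 \<noteq> \<infinity>"
      proof
        assume "P2 = \<infinity>"
        then have "ennreal b * P2 = \<infinity>" using False ab by (simp add: ennreal_mult_top)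
        then show False using H Rfin by (simp add: top_unique)
      qed
      then obtain q where "P2 = ennreal q" "0 \<le> q" by (cases P2) auto
      then show ?thesis using h2 n2 ab by (intro exI[of _ q]) (simp add: ennreal_mult)
    qed
    obtain q1 where q1: "ennreal a * P1 = ennreal (a * q1)" "0 \<le> a * q1" "B \<le> q1 - n1" using q1 by blast
    obtain q2 where q2: "ennreal b * P2 = ennreal (b * q2)" "0 \<le> b * q2" "B \<le> q2 - n2" using q2 by blast
    have "ennreal (n + a * q1 + b * q2) = N + ennreal a * P1 + ennreal b * P2"
      using n q1 q2 by (simp add: ennreal_add3)
    also have "\<dots> \<le> P + ennreal a * N1 + ennreal b * N2" by (rule H)
    also have "\<dots> = ennreal (p + a * n1 + b * n2)" by (rule Rfin)
    finally have "ennreal (n + a * q1 + b * q2) \<le> ennreal (p + a * n1 + b * n2)" .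
    then have "n + a * q1 + b * q2 \<le> p + a * n1 + b * n2"
      using p n1 n2 ab by (subst (asm) ennreal_le_iff) (auto simp: mult_nonneg_nonneg)
    moreover have "a * B \<le> a * (q1 - n1)" "b * B \<le> b * (q2 - n2)"
      using q1 q2 ab by (simp_all add: mult_left_mono)
    moreover have "a * (q1 - n1) = a * q1 - a * n1" "b * (q2 - n2) = b * q2 - b * n2"
      by (simp_all add: right_diff_distrib)
    moreover have "a * B + b * B = B" using ab(3) by (metis distrib_right mult_1)
    ultimately have "B \<le> p - n" by linarith
    then show ?thesis using p n by simp
  qed
qed
lemma memLp_meas: "memLp M N p X \<Longrightarrow> X \<in> borel_measurable N"
  by (simp add: memLp_def)

lemma memLp_comb:
  assumes sub: "subalgebra M N" and p: "1 \<le> p"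
    and X: "memLp M N p X" and Y: "memLp M N p Y"
    and g: "g \<in> borel_measurable N" and c: "0 \<le> c"
    and bnd: "\<And>x. \<bar>g x\<bar> \<le> c * max \<bar>X x\<bar> \<bar>Y x\<bar>"
  shows "memLp M N p g"
proof (cases "p = \<infinity>")
  case True
  obtain CX where CX: "AE x in M. \<bar>X x\<bar> \<le> CX" using X True by (auto simp: memLp_def)
  obtain CY where CY: "AE x in M. \<bar>Y x\<bar> \<le> CY" using Y True by (auto simp: memLp_def)
  have "AE x in M. \<bar>g x\<bar> \<le> c * max CX CY"
    using CX CY
  proof eventually_elim
    case (elim x)
    have "max \<bar>X x\<bar> \<bar>Y x\<bar> \<le> max CX CY" using elim by auto
    then show ?case using bnd[of x] c by (meson mult_left_mono order_trans)
  qed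
  then show ?thesis using True g by (auto simp: memLp_def)
next
  case False
  define q where "q = real_of_ereal p"
  have q: "0 \<le> q" using p False unfolding q_def
    by (cases p) auto
  have iX: "integrable M (\<lambda>x. \<bar>X x\<bar> powr q)" using X False by (simp add: memLp_def q_def)
  have iY: "integrable M (\<lambda>x. \<bar>Y x\<bar> powr q)" using Y False by (simp add: memLp_def q_def)
  have gM: "g \<in> borel_measurable M" using measurable_from_subalg[OF sub g] .
  have i1: "integrable M (\<lambda>x. c powr q * (\<bar>X x\<bar> powr q + \<bar>Y x\<bar> powr q))"
    by (rule integrable_mult_right, rule Bochner_Integration.integrable_add[OF iX iY])
  have i2: "(\<lambda>x. \<bar>g x\<bar> powr q) \<in> borel_measurable M" using gM by measurable
  have i3: "AE x in M. norm (\<bar>g x\<bar> powr q) \<le> norm (c powr q * (\<bar>X x\<bar> powr q + \<bar>Y x\<bar> powr q))"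
  proof (rule AE_I2)
    fix x
    have "\<bar>g x\<bar> powr q \<le> (c * max \<bar>X x\<bar> \<bar>Y x\<bar>) powr q"
      using bnd[of x] q by (intro powr_mono2) auto
    also have "\<dots> = c powr q * (max \<bar>X x\<bar> \<bar>Y x\<bar>) powr q"
      using c by (simp add: powr_mult)
    also have "(max \<bar>X x\<bar> \<bar>Y x\<bar>) powr q \<le> \<bar>X x\<bar> powr q + \<bar>Y x\<bar> powr q"
      by (cases "\<bar>X x\<bar> \<le> \<bar>Y x\<bar>") (auto simp: max_def)
    then have "c powr q * (max \<bar>X x\<bar> \<bar>Y x\<bar>) powr q \<le> c powr q * (\<bar>X x\<bar> powr q + \<bar>Y x\<bar> powr q)"
      by (simp add: mult_left_mono)
    finally show "norm (\<bar>g x\<bar> powr q) \<le> norm (c powr q * (\<bar>X x\<bar> powr q + \<bar>Y x\<bar> powr q))"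
      by simp
  qed
  have "integrable M (\<lambda>x. \<bar>g x\<bar> powr q)" by (rule Bochner_Integration.integrable_bound[OF i1 i2 i3])
  then show ?thesis using False g by (simp add: memLp_def q_def)
qed

lemma memLp_sub:
  assumes "memLp M N p X" "sets N \<subseteq> sets N'" "space N = space N'"
  shows "memLp M N' p X"
proof -
  have "subalgebra N' N" using assms(2,3) by (simp add: subalgebra_def)
  then have "X \<in> borel_measurable N'"
    using measurable_from_subalg memLp_meas[OF assms(1)] by blast
  then show ?thesis using assms(1) by (simp add: memLp_def)
qed

lemma ess_inf_lb: "is_ess_inf M N S Z \<Longrightarrow> Y \<in> S \<Longrightarrow> AE x in M. Z x \<le> ereal (Y x)"
  by (simp add: is_ess_inf_def)

lemma ess_inf_glb: "is_ess_inf M N S Z \<Longrightarrow> W \<in> borel_measurable N \<Longrightarrow>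
   (\<And>Y. Y \<in> S \<Longrightarrow> AE x in M. W x \<le> ereal (Y x)) \<Longrightarrow> AE x in M. W x \<le> Z x"
  by (simp add: is_ess_inf_def)

lemma ess_inf_meas: "is_ess_inf M N S Z \<Longrightarrow> Z \<in> borel_measurable N"
  by (simp add: is_ess_inf_def)

lemma (in sigma_finite_subalgebra) nn_cond_exp_lin3:
  assumes [measurable]: "f \<in> borel_measurable M" "g \<in> borel_measurable M" "h \<in> borel_measurable M"
  shows "AE x in M. nn_cond_exp M F (\<lambda>x. f x + ennreal c * g x + ennreal d * h x) x
     = nn_cond_exp M F f x + ennreal c * nn_cond_exp M F g x + ennreal d * nn_cond_exp M F h x"
proof -
  have 1: "AE x in M. nn_cond_exp M F (\<lambda>x. f x + ennreal c * g x) x + nn_cond_exp M F (\<lambda>x. ennreal d * h x) x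
     = nn_cond_exp M F (\<lambda>x. f x + ennreal c * g x + ennreal d * h x) x"
    by (rule nn_cond_exp_sum) measurable
  have 2: "AE x in M. nn_cond_exp M F f x + nn_cond_exp M F (\<lambda>x. ennreal c * g x) x
     = nn_cond_exp M F (\<lambda>x. f x + ennreal c * g x) x"
    by (rule nn_cond_exp_sum) measurable
  have 3: "AE x in M. ennreal c * nn_cond_exp M F g x = nn_cond_exp M F (\<lambda>x. ennreal c * g x) x"
    by (rule nn_cond_exp_prod) measurable
  have 4: "AE x in M. ennreal d * nn_cond_exp M F h x = nn_cond_exp M F (\<lambda>x. ennreal d * h x) x"
    by (rule nn_cond_exp_prod) measurable
  show ?thesis using 1 2 3 4 by eventually_elim simp
qed

lemma (in sigma_finite_subalgebra) cexp_core:
  fixes Z Zp Zq :: "'a \<Rightarrow> ereal" and a b B :: real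
  assumes ab: "0 \<le> a" "0 \<le> b" "a + b = 1"
   and fin: "AE x in M. Zp x < \<infinity>" "AE x in M. Zq x < \<infinity>"
   and le: "AE x in M. ereal a * Zp x + ereal b * Zq x \<le> Z x"
   and wd: "ext_cond_exp_wd M F Z" "ext_cond_exp_wd M F Zp" "ext_cond_exp_wd M F Zq"
   and h1: "AE x in M. ereal B \<le> ext_cond_exp M F Zp x"
   and h2: "AE x in M. ereal B \<le> ext_cond_exp M F Zq x"
  shows "AE x in M. ereal B \<le> ext_cond_exp M F Z x"
proof -
  have [measurable]: "Z \<in> borel_measurable M" "Zp \<in> borel_measurable M" "Zq \<in> borel_measurable M"
    using wd by (auto simp: ext_cond_exp_wd_def)
  let ?L = "\<lambda>x. e2ennreal (- Z x) + ennreal a * e2ennreal (Zp x) + ennreal b * e2ennreal (Zq x)"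
  let ?R = "\<lambda>x. e2ennreal (Z x) + ennreal a * e2ennreal (- Zp x) + ennreal b * e2ennreal (- Zq x)"
  have "AE x in M. ?L x \<le> ?R x"
    using fin le by eventually_elim (rule pt_ineq[OF ab(1,2)])
  then have mono: "AE x in M. nn_cond_exp M F ?L x \<le> nn_cond_exp M F ?R x"
    by (rule nn_cond_exp_mono) measurable
  have linL: "AE x in M. nn_cond_exp M F ?L x = nn_cond_exp M F (\<lambda>x. e2ennreal (- Z x)) x
      + ennreal a * nn_cond_exp M F (\<lambda>x. e2ennreal (Zp x)) x + ennreal b * nn_cond_exp M F (\<lambda>x. e2ennreal (Zq x)) x"
    by (rule nn_cond_exp_lin3) measurable
  have linR: "AE x in M. nn_cond_exp M F ?R x = nn_cond_exp M F (\<lambda>x. e2ennreal (Z x)) x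
      + ennreal a * nn_cond_exp M F (\<lambda>x. e2ennreal (- Zp x)) x + ennreal b * nn_cond_exp M F (\<lambda>x. e2ennreal (- Zq x)) x"
    by (rule nn_cond_exp_lin3) measurable
  have w0: "AE x in M. \<not> (nn_cond_exp M F (\<lambda>x. e2ennreal (Z x)) x = \<infinity> \<and> nn_cond_exp M F (\<lambda>x. e2ennreal (- Z x)) x = \<infinity>)"
    using wd(1) by (simp add: ext_cond_exp_wd_def)
  have w1: "AE x in M. \<not> (nn_cond_exp M F (\<lambda>x. e2ennreal (Zp x)) x = \<infinity> \<and> nn_cond_exp M F (\<lambda>x. e2ennreal (- Zp x)) x = \<infinity>)"
    using wd(2) by (simp add: ext_cond_exp_wd_def)
  have w2: "AE x in M. \<not> (nn_cond_exp M F (\<lambda>x. e2ennreal (Zq x)) x = \<infinity> \<and> nn_cond_exp M F (\<lambda>x. e2ennreal (- Zq x)) x = \<infinity>)"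
    using wd(3) by (simp add: ext_cond_exp_wd_def)
  show ?thesis
    using mono linL linR w0 w1 w2 h1 h2
  proof eventually_elim
    case (elim x)
    have H: "nn_cond_exp M F (\<lambda>x. e2ennreal (- Z x)) x
      + ennreal a * nn_cond_exp M F (\<lambda>x. e2ennreal (Zp x)) x + ennreal b * nn_cond_exp M F (\<lambda>x. e2ennreal (Zq x)) x
      \<le> nn_cond_exp M F (\<lambda>x. e2ennreal (Z x)) x
      + ennreal a * nn_cond_exp M F (\<lambda>x. e2ennreal (- Zp x)) x + ennreal b * nn_cond_exp M F (\<lambda>x. e2ennreal (- Zq x)) x"
      using elim(1,2,3) by simp
    show ?case unfolding ext_cond_exp_def
      by (rule final_arith[OF ab H]) (use elim in \<open>auto simp: ext_cond_exp_def\<close>)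
  qed
qed
definition cvx_aux1 :: "real \<Rightarrow> ereal \<Rightarrow> real \<Rightarrow> ereal" where
  "cvx_aux1 l zl y = (if zl = -\<infinity> then -\<infinity> else if zl = \<infinity> then \<infinity>
      else ereal ((real_of_ereal zl - (1 - l) * y) / l))"

definition cvx_aux2 :: "real \<Rightarrow> ereal \<Rightarrow> ereal \<Rightarrow> ereal" where
  "cvx_aux2 l zl zx = (if zx = \<infinity> \<or> zl = -\<infinity> then -\<infinity> else if zx = -\<infinity> \<or> zl = \<infinity> then \<infinity>
      else ereal ((real_of_ereal zl - l * real_of_ereal zx) / (1 - l)))"

lemma cvx_L1:
  assumes "0 < l" "l < 1" "zl \<le> ereal (l * x + (1 - l) * y)"
  shows "cvx_aux1 l zl y \<le> ereal x"
proof (cases zl)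
  case (real r)
  then have "r - (1 - l) * y \<le> x * l" using assms by (simp add: algebra_simps)
  then show ?thesis using real assms by (simp add: cvx_aux1_def pos_divide_le_eq)
qed (use assms in \<open>auto simp: cvx_aux1_def\<close>)

lemma cvx_L2:
  assumes "0 < l" "l < 1" "cvx_aux1 l zl y \<le> zx"
  shows "zl \<le> ereal l * zx + ereal (1 - l) * ereal y"
proof (cases zl)
  case (real r)
  show ?thesis
  proof (cases zx)
    case (real s)
    then have "(r - (1 - l) * y) / l \<le> s" using assms \<open>zl = ereal r\<close> by (simp add: cvx_aux1_def)
    then have "r - (1 - l) * y \<le> s * l" using assms by (simp add: pos_divide_le_eq)
    then show ?thesis using real \<open>zl = ereal r\<close> by (simp add: algebra_simps)
  next
    case PInf
    then show ?thesis using assms by simp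
  next
    case MInf
    then show ?thesis using assms \<open>zl = ereal r\<close> by (simp add: cvx_aux1_def)
  qed
next
  case PInf
  then have "zx = \<infinity>" using assms by (simp add: cvx_aux1_def)
  then show ?thesis using assms PInf by simp
next
  case MInf
  then show ?thesis by simp
qed

lemma cvx_L3:
  assumes "0 < l" "l < 1" "zl \<le> ereal l * zx + ereal (1 - l) * ereal y"
  shows "cvx_aux2 l zl zx \<le> ereal y"
proof (cases zx)
  case (real s)
  show ?thesis
  proof (cases zl)
    case (real r)
    then have "r - l * s \<le> y * (1 - l)" using assms \<open>zx = ereal s\<close> by (simp add: algebra_simps)
    then show ?thesis using real \<open>zx = ereal s\<close> assms by (simp add: cvx_aux2_def pos_divide_le_eq)
  next
    case PInf
    then show ?thesis using assms \<open>zx = ereal s\<close> by simp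
  next
    case MInf
    then show ?thesis by (simp add: cvx_aux2_def)
  qed
next
  case PInf
  then show ?thesis by (simp add: cvx_aux2_def)
next
  case MInf
  then have "zl = -\<infinity>" using assms by simp
  then show ?thesis by (simp add: cvx_aux2_def)
qed

lemma cvx_L4:
  assumes "0 < l" "l < 1" "cvx_aux2 l zl zx \<le> zy"
  shows "zl \<le> ereal l * zx + ereal (1 - l) * zy"
proof (cases "zx = \<infinity> \<or> zl = -\<infinity>")
  case True
  then show ?thesis using assms by auto
next
  case False
  then have nz: "zx \<noteq> \<infinity>" "zl \<noteq> -\<infinity>" by auto
  show ?thesis
  proof (cases "zx = -\<infinity> \<or> zl = \<infinity>")
    case True
    then have "zy = \<infinity>" using assms nz by (auto simp: cvx_aux2_def)
    then show ?thesis using assms by simp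
  next
    case False
    then obtain r s where rs: "zl = ereal r" "zx = ereal s" using nz by (cases zl; cases zx) auto
    then have le: "ereal ((r - l * s) / (1 - l)) \<le> zy" using assms by (simp add: cvx_aux2_def)
    show ?thesis
    proof (cases zy)
      case (real w)
      then have "(r - l * s) / (1 - l) \<le> w" using le by simp
      then have "r - l * s \<le> w * (1 - l)" using assms by (simp add: pos_divide_le_eq)
      then show ?thesis using rs real by (simp add: algebra_simps)
    next
      case PInf
      then show ?thesis using rs assms by simp
    next
      case MInf
      then show ?thesis using le by simp
    qed
  qed
qed

lemma conv_bound:
  fixes l x y :: real
  assumes "0 \<le> l" "l \<le> 1"
  shows "\<bar>l * x + (1 - l) * y\<bar> \<le> 1 * max \<bar>x\<bar> \<bar>y\<bar>"
proof -
  have "\<bar>l * x + (1 - l) * y\<bar> \<le> \<bar>l * x\<bar> + \<bar>(1 - l) * y\<bar>" by (rule abs_triangle_ineq)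
  also have "\<dots> = l * \<bar>x\<bar> + (1 - l) * \<bar>y\<bar>" using assms by (simp add: abs_mult)
  also have "\<dots> \<le> l * max \<bar>x\<bar> \<bar>y\<bar> + (1 - l) * max \<bar>x\<bar> \<bar>y\<bar>"
    using assms by (intro add_mono mult_left_mono) auto
  also have "\<dots> = 1 * max \<bar>x\<bar> \<bar>y\<bar>" by (simp add: algebra_simps)
  finally show ?thesis .
qed

lemma sum_bound: "\<bar>(x::real) + y\<bar> \<le> 2 * max \<bar>x\<bar> \<bar>y\<bar>"
  by (cases "\<bar>x\<bar> \<le> \<bar>y\<bar>") (auto simp: max_def)

lemma max_bound: "\<bar>max (x::real) y\<bar> \<le> 1 * max \<bar>x\<bar> \<bar>y\<bar>"
  by (auto simp: max_def)
theorem mainTheorem11: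
  fixes M :: "'a measure" and F :: "real \<Rightarrow> 'a measure" and T :: real and p :: ereal
    and f :: "real \<Rightarrow> real \<Rightarrow> real \<Rightarrow> ereal" and U :: "real \<Rightarrow> ereal \<Rightarrow> ereal"
    and B :: "real \<Rightarrow> real \<Rightarrow> real" and t u :: real
  assumes M: "prob_space M"
    and filt_sub: "\<And>s. s \<in> {0..T} \<Longrightarrow> subalgebra M (F s)"
    and filt_mono: "\<And>s r. 0 \<le> s \<Longrightarrow> s \<le> r \<Longrightarrow> r \<le> T \<Longrightarrow> sets (F s) \<subseteq> sets (F r)"
    and p: "1 \<le> p"
    and f_fin: "\<And>v y m. v \<in> {0..T} \<Longrightarrow> f v y m < \<infinity>"
    and f_nonconst: "\<And>v. v \<in> {0..T} \<Longrightarrow> \<exists>y1 m1 y2 m2. f v y1 m1 \<noteq> f v y2 m2"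
    and U_fin: "\<And>v x. v \<in> {0..T} \<Longrightarrow> x < \<infinity> \<Longrightarrow> U v x < \<infinity>"
    and U_concave: "\<And>v. v \<in> {0..T} \<Longrightarrow> concave_ereal_on {x. x < \<infinity>} (U v)"
    and U_mono: "\<And>v. v \<in> {0..T} \<Longrightarrow> mono_on {x. x < \<infinity>} (U v)"
    and U_nontriv: "\<And>v. v \<in> {0..T} \<Longrightarrow> \<exists>x y. x < \<infinity> \<and> y < \<infinity> \<and> U v x \<noteq> U v y"
    and cexp_wd: "\<And>s r X m. 0 \<le> s \<Longrightarrow> s \<le> r \<Longrightarrow> r \<le> T \<Longrightarrow> memLp M (F r) p X \<Longrightarrow>
        memLp M (F s) p m \<Longrightarrow> ext_cond_exp_wd M (F s) (\<lambda>\<omega>. U r (f r (X \<omega>) (m \<omega>)))"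
    and tu: "0 \<le> t" "t \<le> u" "u \<le> T"
  shows
   "((\<forall>y. mono (\<lambda>m. U u (f u y m))) \<and> (\<forall>m. mono (\<lambda>y. U u (f u y m))) \<and>
     (\<forall>m. concave_real_ereal (\<lambda>y. U u (f u y m)))
     \<longrightarrow>
      (\<forall>X Y ZX ZY. memLp M (F u) p X \<longrightarrow> memLp M (F u) p Y \<longrightarrow>
         (AE \<omega> in M. X \<omega> \<le> Y \<omega>) \<longrightarrow>
         is_shortfall_rm M F p f U B t u X ZX \<longrightarrow> is_shortfall_rm M F p f U B t u Y ZY \<longrightarrow>
         (AE \<omega> in M. ZY \<omega> \<le> ZX \<omega>))
    \<and> (\<forall>X Y l ZX ZY Zl. memLp M (F u) p X \<longrightarrow> memLp M (F u) p Y \<longrightarrow> 0 \<le> l \<longrightarrow> l \<le> 1 \<longrightarrow>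
         is_shortfall_rm M F p f U B t u X ZX \<longrightarrow> is_shortfall_rm M F p f U B t u Y ZY \<longrightarrow>
         is_shortfall_rm M F p f U B t u (\<lambda>\<omega>. l * X \<omega> + (1 - l) * Y \<omega>) Zl \<longrightarrow>
         (AE \<omega> in M. Zl \<omega> \<le> max (ZX \<omega>) (ZY \<omega>))))
  \<and> ((\<forall>y. mono (\<lambda>m. U u (f u y m))) \<and> (\<forall>m. mono (\<lambda>y. U u (f u y m))) \<and>
     (\<forall>m. concave_real_ereal (\<lambda>y. U u (f u y m))) \<and>
     jointly_concave_ereal (\<lambda>y m. U u (f u y m))
     \<longrightarrow>
      (\<forall>X Y l ZX ZY Zl. memLp M (F u) p X \<longrightarrow> memLp M (F u) p Y \<longrightarrow> 0 \<le> l \<longrightarrow> l \<le> 1 \<longrightarrow>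
         is_shortfall_rm M F p f U B t u X ZX \<longrightarrow> is_shortfall_rm M F p f U B t u Y ZY \<longrightarrow>
         is_shortfall_rm M F p f U B t u (\<lambda>\<omega>. l * X \<omega> + (1 - l) * Y \<omega>) Zl \<longrightarrow>
         (AE \<omega> in M. Zl \<omega> \<le> ereal l * ZX \<omega> + ereal (1 - l) * ZY \<omega>)))
  \<and> ((\<forall>y. mono (\<lambda>m. U u (f u y m))) \<and> (\<forall>m. mono (\<lambda>y. U u (f u y m))) \<and>
     (\<forall>m. concave_real_ereal (\<lambda>y. U u (f u y m))) \<and>
     (\<forall>y k m. 0 < m \<longrightarrow> f u y k \<le> f u (y - m) (k + m))
     \<longrightarrow>
      (\<forall>X mt ZX Zm. memLp M (F u) p X \<longrightarrow> memLp M (F t) p mt \<longrightarrow> (AE \<omega> in M. 0 \<le> mt \<omega>) \<longrightarrow>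
         is_shortfall_rm M F p f U B t u X ZX \<longrightarrow>
         is_shortfall_rm M F p f U B t u (\<lambda>\<omega>. X \<omega> + mt \<omega>) Zm \<longrightarrow>
         (AE \<omega> in M. ZX \<omega> - ereal (mt \<omega>) \<le> Zm \<omega>)))"
proof -
  interpret P: prob_space M by (rule M)
  have t01: "t \<in> {0..T}" "u \<in> {0..T}" using tu by auto
  have subt: "subalgebra M (F t)" and subu: "subalgebra M (F u)" using filt_sub t01 by auto
  have tsubu: "sets (F t) \<subseteq> sets (F u)" using filt_mono tu by auto
  have sp: "space (F t) = space (F u)" using subt subu by (simp add: subalgebra_def)
  have fm: "finite_measure M" using M by (simp add: prob_space_def)
  have sfs: "sigma_finite_subalgebra M (F t)"
    by (rule finite_measure_subalgebra_is_sigma_finite)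
       (simp add: finite_measure_subalgebra_def finite_measure_subalgebra_axioms_def fm subt)
  have acc_iff: "m \<in> shortfall_accept M F p f U B t u X \<longleftrightarrow> memLp M (F t) p m \<and>
      (AE \<omega> in M. ereal (B t u) \<le> ext_cond_exp M (F t) (\<lambda>x. U u (f u (X x) (m x))) \<omega>)" for m X
    by (simp add: shortfall_accept_def)
  have wdG: "ext_cond_exp_wd M (F t) (\<lambda>x. U u (f u (X x) (m x)))"
    if "memLp M (F u) p X" "memLp M (F t) p m" for X m
    using cexp_wd[OF tu(1) tu(2) tu(3) that] .
  have finG: "U u (f u y m) < \<infinity>" for y m
    using U_fin[OF t01(2)] f_fin[OF t01(2)] by blast
  have acc_gen: "m \<in> shortfall_accept M F p f U B t u X"
    if X: "memLp M (F u) p X" and X1: "memLp M (F u) p X1" and X2: "memLp M (F u) p X2"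
      and m: "memLp M (F t) p m"
      and m1: "m1 \<in> shortfall_accept M F p f U B t u X1"
      and m2: "m2 \<in> shortfall_accept M F p f U B t u X2"
      and a: "0 \<le> a" "a \<le> 1"
      and le: "AE \<omega> in M. ereal a * U u (f u (X1 \<omega>) (m1 \<omega>)) + ereal (1 - a) * U u (f u (X2 \<omega>) (m2 \<omega>))
                 \<le> U u (f u (X \<omega>) (m \<omega>))"
    for X X1 X2 m m1 m2 a
  proof -
    have m1L: "memLp M (F t) p m1" and h1: "AE \<omega> in M. ereal (B t u) \<le> ext_cond_exp M (F t) (\<lambda>x. U u (f u (X1 x) (m1 x))) \<omega>"
      using m1 by (auto simp: acc_iff)
    have m2L: "memLp M (F t) p m2" and h2: "AE \<omega> in M. ereal (B t u) \<le> ext_cond_exp M (F t) (\<lambda>x. U u (f u (X2 x) (m2 x))) \<omega>"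
      using m2 by (auto simp: acc_iff)
    have "AE \<omega> in M. ereal (B t u) \<le> ext_cond_exp M (F t) (\<lambda>x. U u (f u (X x) (m x))) \<omega>"
      apply (rule sigma_finite_subalgebra.cexp_core[OF sfs, where a=a and b="1 - a" and Z="\<lambda>x. U u (f u (X x) (m x))" and Zp="\<lambda>x. U u (f u (X1 x) (m1 x))" and Zq="\<lambda>x. U u (f u (X2 x) (m2 x))"])
      using a le h1 h2 finG wdG[OF X m] wdG[OF X1 m1L] wdG[OF X2 m2L] by auto
    then show ?thesis using m by (simp add: acc_iff)
  qed
  have acc_mono: "m' \<in> shortfall_accept M F p f U B t u X'"
    if X: "memLp M (F u) p X" and X': "memLp M (F u) p X'" and m': "memLp M (F t) p m'"
      and m: "m \<in> shortfall_accept M F p f U B t u X"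
      and le: "AE \<omega> in M. U u (f u (X \<omega>) (m \<omega>)) \<le> U u (f u (X' \<omega>) (m' \<omega>))"
    for X X' m m'
    by (rule acc_gen[OF X' X X m' m m, of 1]) (use le in \<open>auto simp: zero_ereal_def[symmetric]\<close>)
  show ?thesis
    apply (intro conjI impI allI)
    subgoal premises prems for X Y ZX ZY
    proof -
      have monoy: "\<And>m. mono (\<lambda>y. U u (f u y m))" using prems(1) by blast
      have [measurable]: "ZY \<in> borel_measurable (F t)"
        using prems(6) by (auto simp: is_shortfall_rm_def is_ess_inf_def)
      show ?thesis
      proof (rule ess_inf_glb[OF prems(5)[unfolded is_shortfall_rm_def]])
        show "ZY \<in> borel_measurable (F t)" by simp
        fix m assume m: "m \<in> shortfall_accept M F p f U B t u X"
        have "m \<in> shortfall_accept M F p f U B t u Y"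
        proof (rule acc_mono[OF prems(2) prems(3) _ m])
          show "memLp M (F t) p m" using m by (simp add: acc_iff)
          show "AE \<omega> in M. U u (f u (X \<omega>) (m \<omega>)) \<le> U u (f u (Y \<omega>) (m \<omega>))"
            using prems(4) by eventually_elim (rule monoD[OF monoy])
        qed
        then show "AE \<omega> in M. ZY \<omega> \<le> ereal (m \<omega>)"
          using prems(6) ess_inf_lb unfolding is_shortfall_rm_def by blast
      qed
    qed
    subgoal premises prems for X Y l ZX ZY Zl
    proof -
      have monom: "\<And>y. mono (\<lambda>m. U u (f u y m))" using prems(1) by blast
      have conc: "\<And>m. concave_real_ereal (\<lambda>y. U u (f u y m))" using prems(1) by blast
      have EX: "is_ess_inf M (F t) (shortfall_accept M F p f U B t u X) ZX"
        and EY: "is_ess_inf M (F t) (shortfall_accept M F p f U B t u Y) ZY"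
        and EL: "is_ess_inf M (F t) (shortfall_accept M F p f U B t u (\<lambda>\<omega>. l * X \<omega> + (1 - l) * Y \<omega>)) Zl"
        using prems(6,7,8) by (simp_all add: is_shortfall_rm_def)
      have [measurable]: "Zl \<in> borel_measurable (F t)" "ZX \<in> borel_measurable (F t)"
        using EL EX by (simp_all add: is_ess_inf_def)
      have mixL: "memLp M (F u) p (\<lambda>\<omega>. l * X \<omega> + (1 - l) * Y \<omega>)"
      proof (rule memLp_comb[OF subu p prems(2) prems(3) _ _ conv_bound[OF prems(4,5)]])
        note [measurable] = memLp_meas[OF prems(2)] memLp_meas[OF prems(3)]
        show "(\<lambda>\<omega>. l * X \<omega> + (1 - l) * Y \<omega>) \<in> borel_measurable (F u)" by measurable
      qed simp
      have pair: "AE \<omega> in M. Zl \<omega> \<le> ereal (max (mX \<omega>) (mY \<omega>))"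
        if mX: "mX \<in> shortfall_accept M F p f U B t u X" and mY: "mY \<in> shortfall_accept M F p f U B t u Y"
        for mX mY
      proof -
        have mXL: "memLp M (F t) p mX" and mYL: "memLp M (F t) p mY" using mX mY by (simp_all add: acc_iff)
        note [measurable] = memLp_meas[OF mXL] memLp_meas[OF mYL]
        have mL: "memLp M (F t) p (\<lambda>\<omega>. max (mX \<omega>) (mY \<omega>))"
          by (rule memLp_comb[OF subt p mXL mYL _ _ max_bound]) (rule borel_measurable_max[OF memLp_meas[OF mYL] memLp_meas[OF mXL]], simp)
        have a1: "(\<lambda>\<omega>. max (mX \<omega>) (mY \<omega>)) \<in> shortfall_accept M F p f U B t u X"
          by (rule acc_mono[OF prems(2) prems(2) mL mX]) (auto intro!: monoD[OF monom])
        have a2: "(\<lambda>\<omega>. max (mX \<omega>) (mY \<omega>)) \<in> shortfall_accept M F p f U B t u Y"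
          by (rule acc_mono[OF prems(3) prems(3) mL mY]) (auto intro!: monoD[OF monom])
        have "(\<lambda>\<omega>. max (mX \<omega>) (mY \<omega>)) \<in> shortfall_accept M F p f U B t u (\<lambda>\<omega>. l * X \<omega> + (1 - l) * Y \<omega>)"
          by (rule acc_gen[OF mixL prems(2) prems(3) mL a1 a2 prems(4) prems(5)])
             (use conc in \<open>auto simp: concave_real_ereal_def prems(4,5)\<close>)
        then show ?thesis using ess_inf_lb[OF EL] by blast
      qed
      have step1: "AE \<omega> in M. Zl \<omega> \<le> ereal (mY \<omega>) \<or> Zl \<omega> \<le> ZX \<omega>"
        if mY: "mY \<in> shortfall_accept M F p f U B t u Y" for mY
      proof -
        have mYL: "memLp M (F t) p mY" using mY by (simp add: acc_iff)
        note [measurable] = memLp_meas[OF mYL]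
        have "AE \<omega> in M. (if Zl \<omega> \<le> ereal (mY \<omega>) then -\<infinity> else Zl \<omega>) \<le> ZX \<omega>"
        proof (rule ess_inf_glb[OF EX])
          show "(\<lambda>\<omega>. if Zl \<omega> \<le> ereal (mY \<omega>) then -\<infinity> else Zl \<omega>) \<in> borel_measurable (F t)"
            by measurable
          fix mX assume mX: "mX \<in> shortfall_accept M F p f U B t u X"
          show "AE \<omega> in M. (if Zl \<omega> \<le> ereal (mY \<omega>) then -\<infinity> else Zl \<omega>) \<le> ereal (mX \<omega>)"
            using pair[OF mX mY] by eventually_elim (auto simp: max_def split: if_splits)
        qed
        then show ?thesis by eventually_elim (auto split: if_splits)
      qed
      have "AE \<omega> in M. (if Zl \<omega> \<le> ZX \<omega> then -\<infinity> else Zl \<omega>) \<le> ZY \<omega>"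
      proof (rule ess_inf_glb[OF EY])
        show "(\<lambda>\<omega>. if Zl \<omega> \<le> ZX \<omega> then -\<infinity> else Zl \<omega>) \<in> borel_measurable (F t)"
          by measurable
        fix mY assume mY: "mY \<in> shortfall_accept M F p f U B t u Y"
        show "AE \<omega> in M. (if Zl \<omega> \<le> ZX \<omega> then -\<infinity> else Zl \<omega>) \<le> ereal (mY \<omega>)"
          using step1[OF mY] by eventually_elim auto
      qed
      then show ?thesis by eventually_elim (auto split: if_splits simp: le_max_iff_disj)
    qed
    subgoal premises prems for X Y l ZX ZY Zl
    proof -
      have jc: "jointly_concave_ereal (\<lambda>y m. U u (f u y m))" using prems(1) by blast
      have EX: "is_ess_inf M (F t) (shortfall_accept M F p f U B t u X) ZX"
        and EY: "is_ess_inf M (F t) (shortfall_accept M F p f U B t u Y) ZY"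
        and EL: "is_ess_inf M (F t) (shortfall_accept M F p f U B t u (\<lambda>\<omega>. l * X \<omega> + (1 - l) * Y \<omega>)) Zl"
        using prems(6,7,8) by (simp_all add: is_shortfall_rm_def)
      have [measurable]: "Zl \<in> borel_measurable (F t)" "ZX \<in> borel_measurable (F t)"
        using EL EX by (simp_all add: is_ess_inf_def)
      show ?thesis
      proof (cases "l = 1")
        case True
        have "AE \<omega> in M. Zl \<omega> \<le> ZX \<omega>"
        proof (rule ess_inf_glb[OF EX])
          fix m assume "m \<in> shortfall_accept M F p f U B t u X"
          then show "AE \<omega> in M. Zl \<omega> \<le> ereal (m \<omega>)" using ess_inf_lb[OF EL] True by simp
        qed simp
        then show ?thesis using True by (simp add: zero_ereal_def[symmetric] one_ereal_def[symmetric])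
      next
        case l1: False
        show ?thesis
        proof (cases "l = 0")
          case True
          have "AE \<omega> in M. Zl \<omega> \<le> ZY \<omega>"
          proof (rule ess_inf_glb[OF EY])
            fix m assume "m \<in> shortfall_accept M F p f U B t u Y"
            then show "AE \<omega> in M. Zl \<omega> \<le> ereal (m \<omega>)" using ess_inf_lb[OF EL] True by simp
          qed simp
          then show ?thesis using True by (simp add: zero_ereal_def[symmetric] one_ereal_def[symmetric])
        next
          case False
          have l: "0 < l" "l < 1" using False l1 prems(4,5) by auto
          have mixL: "memLp M (F u) p (\<lambda>\<omega>. l * X \<omega> + (1 - l) * Y \<omega>)"
          proof (rule memLp_comb[OF subu p prems(2) prems(3) _ _ conv_bound[OF prems(4,5)]])
            note [measurable] = memLp_meas[OF prems(2)] memLp_meas[OF prems(3)]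
            show "(\<lambda>\<omega>. l * X \<omega> + (1 - l) * Y \<omega>) \<in> borel_measurable (F u)" by measurable
          qed simp
          have pair: "AE \<omega> in M. Zl \<omega> \<le> ereal (l * mX \<omega> + (1 - l) * mY \<omega>)"
            if mX: "mX \<in> shortfall_accept M F p f U B t u X" and mY: "mY \<in> shortfall_accept M F p f U B t u Y"
            for mX mY
          proof -
            have mXL: "memLp M (F t) p mX" and mYL: "memLp M (F t) p mY" using mX mY by (simp_all add: acc_iff)
            note [measurable] = memLp_meas[OF mXL] memLp_meas[OF mYL]
            have mM: "(\<lambda>\<omega>. l * mX \<omega> + (1 - l) * mY \<omega>) \<in> borel_measurable (F t)" by measurable
            have mL: "memLp M (F t) p (\<lambda>\<omega>. l * mX \<omega> + (1 - l) * mY \<omega>)"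
              by (rule memLp_comb[OF subt p mXL mYL mM _ conv_bound[OF prems(4,5)]]) simp
            have "(\<lambda>\<omega>. l * mX \<omega> + (1 - l) * mY \<omega>) \<in> shortfall_accept M F p f U B t u (\<lambda>\<omega>. l * X \<omega> + (1 - l) * Y \<omega>)"
              by (rule acc_gen[OF mixL prems(2) prems(3) mL mX mY prems(4) prems(5)])
                 (use jc in \<open>auto simp: jointly_concave_ereal_def prems(4,5)\<close>)
            then show ?thesis using ess_inf_lb[OF EL] by blast
          qed
          have step1: "AE \<omega> in M. Zl \<omega> \<le> ereal l * ZX \<omega> + ereal (1 - l) * ereal (mY \<omega>)"
            if mY: "mY \<in> shortfall_accept M F p f U B t u Y" for mY
          proof -
            have mYL: "memLp M (F t) p mY" using mY by (simp add: acc_iff)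
            note [measurable] = memLp_meas[OF mYL]
            have "AE \<omega> in M. cvx_aux1 l (Zl \<omega>) (mY \<omega>) \<le> ZX \<omega>"
            proof (rule ess_inf_glb[OF EX])
              show "(\<lambda>\<omega>. cvx_aux1 l (Zl \<omega>) (mY \<omega>)) \<in> borel_measurable (F t)"
                unfolding cvx_aux1_def by measurable
              fix mX assume mX: "mX \<in> shortfall_accept M F p f U B t u X"
              show "AE \<omega> in M. cvx_aux1 l (Zl \<omega>) (mY \<omega>) \<le> ereal (mX \<omega>)"
                using pair[OF mX mY] by eventually_elim (rule cvx_L1[OF l])
            qed
            then show ?thesis by eventually_elim (rule cvx_L2[OF l])
          qed
          have "AE \<omega> in M. cvx_aux2 l (Zl \<omega>) (ZX \<omega>) \<le> ZY \<omega>"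
          proof (rule ess_inf_glb[OF EY])
            show "(\<lambda>\<omega>. cvx_aux2 l (Zl \<omega>) (ZX \<omega>)) \<in> borel_measurable (F t)"
              unfolding cvx_aux2_def by measurable
            fix mY assume mY: "mY \<in> shortfall_accept M F p f U B t u Y"
            show "AE \<omega> in M. cvx_aux2 l (Zl \<omega>) (ZX \<omega>) \<le> ereal (mY \<omega>)"
              using step1[OF mY] by eventually_elim (rule cvx_L3[OF l])
          qed
          then show ?thesis by eventually_elim (rule cvx_L4[OF l])
        qed
      qed
    qed
    subgoal premises prems for X mt ZX Zm
    proof -
      have monoU: "mono_on {x. x < \<infinity>} (U u)" using U_mono t01 by blast
      have shift: "\<And>y k m. 0 < m \<Longrightarrow> f u y k \<le> f u (y - m) (k + m)" using prems(1) by blast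
      have EX: "is_ess_inf M (F t) (shortfall_accept M F p f U B t u X) ZX"
        and EM: "is_ess_inf M (F t) (shortfall_accept M F p f U B t u (\<lambda>\<omega>. X \<omega> + mt \<omega>)) Zm"
        using prems(5,6) by (simp_all add: is_shortfall_rm_def)
      have [measurable]: "ZX \<in> borel_measurable (F t)" using EX by (simp add: is_ess_inf_def)
      note [measurable] = memLp_meas[OF prems(3)]
      have mtu: "memLp M (F u) p mt" by (rule memLp_sub[OF prems(3) tsubu sp])
      have XmL: "memLp M (F u) p (\<lambda>\<omega>. X \<omega> + mt \<omega>)"
      proof (rule memLp_comb[OF subu p prems(2) mtu _ _ sum_bound])
        note [measurable] = memLp_meas[OF prems(2)] memLp_meas[OF mtu]
        show "(\<lambda>\<omega>. X \<omega> + mt \<omega>) \<in> borel_measurable (F u)" by measurable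
      qed simp
      show ?thesis
      proof (rule ess_inf_glb[OF EM])
        show "(\<lambda>\<omega>. ZX \<omega> - ereal (mt \<omega>)) \<in> borel_measurable (F t)" by measurable
        fix m assume m: "m \<in> shortfall_accept M F p f U B t u (\<lambda>\<omega>. X \<omega> + mt \<omega>)"
        have mL: "memLp M (F t) p m" using m by (simp add: acc_iff)
        note [measurable] = memLp_meas[OF mL]
        have m'L: "memLp M (F t) p (\<lambda>\<omega>. m \<omega> + mt \<omega>)"
          by (rule memLp_comb[OF subt p mL prems(3) _ _ sum_bound]) (rule borel_measurable_add[OF memLp_meas[OF mL] memLp_meas[OF prems(3)]], simp)
        have "(\<lambda>\<omega>. m \<omega> + mt \<omega>) \<in> shortfall_accept M F p f U B t u X"
        proof (rule acc_mono[OF XmL prems(2) m'L m])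
          show "AE \<omega> in M. U u (f u (X \<omega> + mt \<omega>) (m \<omega>)) \<le> U u (f u (X \<omega>) (m \<omega> + mt \<omega>))"
            using prems(4)
          proof eventually_elim
            case (elim \<omega>)
            show ?case
            proof (cases "mt \<omega> = 0")
              case True then show ?thesis by simp
            next
              case False
              then have "0 < mt \<omega>" using elim by simp
              from shift[OF this, of "X \<omega> + mt \<omega>" "m \<omega>"]
              have fle: "f u (X \<omega> + mt \<omega>) (m \<omega>) \<le> f u (X \<omega>) (m \<omega> + mt \<omega>)" by simp
              show ?thesis
                by (rule mono_onD[OF monoU _ _ fle]) (use f_fin[OF t01(2)] in auto)
            qed
          qed
        qed
        then have "AE \<omega> in M. ZX \<omega> \<le> ereal (m \<omega> + mt \<omega>)" using ess_inf_lb[OF EX] by blast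
        then show "AE \<omega> in M. ZX \<omega> - ereal (mt \<omega>) \<le> ereal (m \<omega>)"
        proof eventually_elim
          case (elim \<omega>)
          then show ?case by (cases "ZX \<omega>") auto
        qed
      qed
    qed
    done
qed
end
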